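(* For all $m,n\ge 3$, the state complexity of $(U_n(d,c,b,a))^R\,(U_m(a,b,c,d))^R$ (which equals $(U_m(a,b,c,d)\,U_n(d,c,b,a))^R$) is $3\cdot 2^{m+n-2}-2^n+1$.
   Context: The state complexity of a regular language is the number of states of its minimal complete DFA. For $n\ge 3$, $\mathcal{U}_n(a,b,c,d)$ is the DFA over $\{a,b,c,d\}$ with states $\{0,\dots,n-1\}$, initial state $0$, final states $\{n-1\}$, where $a$ maps $i\mapsto i+1\pmod n$; $b$ swaps $0$ and $1$ fixing other states; $c$ maps $n-1$ to $0$ fixing other states; $d$ is the identity. $U_n(a,b,c,d)$ is its language. $U_n(d,c,b,a)$ is the language of the DFA with the same states, initial state $0$ and final states $\{n-1\}$, in which $d$ maps $i\mapsto i+1\pmod n$, $c$ swaps $0$ and $1$, $b$ maps $n-1$ to $0$ fixing others, and $a$ is the identity. $L^R$ is the reversal of $L$, and $KL$ is concatenation. *)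

theory Defs
  imports Main
begin

datatype sym = a | b | c | d

definition is_cdfa :: "nat \<Rightarrow> (nat \<Rightarrow> 'x \<Rightarrow> nat) \<Rightarrow> nat \<Rightarrow> nat set \<Rightarrow> bool" where
  "is_cdfa k delta q0 F \<longleftrightarrow> q0 < k \<and> F \<subseteq> {..<k} \<and> (\<forall>q<k. \<forall>x. delta q x < k)"

definition dfa_lang :: "(nat \<Rightarrow> 'x \<Rightarrow> nat) \<Rightarrow> nat \<Rightarrow> nat set \<Rightarrow> 'x list set" where
  "dfa_lang delta q0 F = {w. foldl delta q0 w \<in> F}"

text \<open>State complexity: number of states of a minimal complete DFA accepting L
(the alphabet is the whole type 'x).\<close>
definition sc :: "'x list set \<Rightarrow> nat" where
  "sc L = (LEAST k. \<exists>delta q0 F. is_cdfa k delta q0 F \<and> dfa_lang delta q0 F = L)"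

definition conc :: "'x list set \<Rightarrow> 'x list set \<Rightarrow> 'x list set" where
  "conc K L = {u @ v | u v. u \<in> K \<and> v \<in> L}"

definition reversal :: "'x list set \<Rightarrow> 'x list set" where
  "reversal L = rev ` L"

fun delta_abcd :: "nat \<Rightarrow> nat \<Rightarrow> sym \<Rightarrow> nat" where
  "delta_abcd n i a = (i + 1) mod n"
| "delta_abcd n i b = (if i = 0 then 1 else if i = 1 then 0 else i)"
| "delta_abcd n i c = (if i = n - 1 then 0 else i)"
| "delta_abcd n i d = i"

fun delta_dcba :: "nat \<Rightarrow> nat \<Rightarrow> sym \<Rightarrow> nat" where
  "delta_dcba n i d = (i + 1) mod n"
| "delta_dcba n i c = (if i = 0 then 1 else if i = 1 then 0 else i)"
| "delta_dcba n i b = (if i = n - 1 then 0 else i)"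
| "delta_dcba n i a = i"

definition U_abcd :: "nat \<Rightarrow> sym list set" where
  "U_abcd n = dfa_lang (delta_abcd n) 0 {n - 1}"

definition U_dcba :: "nat \<Rightarrow> sym list set" where
  "U_dcba n = dfa_lang (delta_dcba n) 0 {n - 1}"

end

theory Submission
  imports Defs
begin


lemma foldl_lt:
  assumes "\<And>q x. q < k \<Longrightarrow> delta q x < k" "q < k"
  shows "foldl delta q w < k"
  using assms(2) by (induction w arbitrary: q) (auto intro: assms(1))

lemma sc_quot:
  fixes W :: "'x list set"
  assumes fin: "finite (range (\<lambda>u. {v. u@v \<in> W}))"
  shows "sc W = card (range (\<lambda>u. {v. u@v \<in> W}))"
proof -
  define Q where "Q = (\<lambda>u. {v. u@v \<in> W})"
  define k where "k = card (range Q)"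
  have finQ: "finite (range Q)" using fin Q_def by simp
  obtain h where h: "bij_betw h {0..<k} (range Q)"
    using ex_bij_betw_nat_finite[OF finQ] k_def by blast
  define g where "g = the_inv_into {0..<k} h"
  have gh: "h (g L) = L" if "L \<in> range Q" for L
    using f_the_inv_into_f_bij_betw[OF h that] g_def by simp
  have gk: "g L < k" if "L \<in> range Q" for L
  proof -
    have "bij_betw g (range Q) {0..<k}" using bij_betw_the_inv_into[OF h] g_def by simp
    then show ?thesis using that bij_betwE by fastforce
  qed
  have hQ: "h i \<in> range Q" if "i < k" for i using h that bij_betwE by fastforce
  define D where "D = (\<lambda>(L::'x list set) x. {v. x#v \<in> L})"
  have DQ: "D (Q u) x = Q (u@[x])" for u x unfolding D_def Q_def by auto
  define delta where "delta = (\<lambda>i x. g (D (h i) x))"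
  define q0 where "q0 = g (Q [])"
  define F where "F = {i. i < k \<and> [] \<in> h i}"
  have run: "foldl delta q0 w = g (Q w)" for w
  proof (induction w rule: rev_induct)
    case Nil then show ?case by (simp add: q0_def)
  next
    case (snoc x w)
    have "foldl delta q0 (w@[x]) = g (D (h (g (Q w))) x)" using snoc by (simp add: delta_def)
    also have "\<dots> = g (Q (w@[x]))" using gh[of "Q w"] DQ by simp
    finally show ?case .
  qed
  have cdfa: "is_cdfa k delta q0 F"
    unfolding is_cdfa_def
  proof (intro conjI allI impI)
    show "q0 < k" using gk q0_def by simp
    show "F \<subseteq> {..<k}" using F_def by auto
    fix q x assume "q < k"
    then obtain u where "h q = Q u" using hQ by blast
    then show "delta q x < k" using gk DQ by (simp add: delta_def)
  qed
  have lang: "dfa_lang delta q0 F = W"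
  proof -
    have "w \<in> dfa_lang delta q0 F \<longleftrightarrow> w \<in> W" for w
    proof -
      have "w \<in> dfa_lang delta q0 F \<longleftrightarrow> g (Q w) < k \<and> [] \<in> h (g (Q w))"
        by (simp add: dfa_lang_def run F_def)
      also have "\<dots> \<longleftrightarrow> [] \<in> Q w" using gk gh by simp
      also have "\<dots> \<longleftrightarrow> w \<in> W" by (simp add: Q_def)
      finally show ?thesis .
    qed
    then show ?thesis by blast
  qed
  have le: "sc W \<le> k" unfolding sc_def using cdfa lang by (intro Least_le) blast
  have ex: "\<exists>delta q0 F. is_cdfa k delta q0 F \<and> dfa_lang delta q0 F = W" using cdfa lang by blast
  obtain delta' q0' F' where D': "is_cdfa (sc W) delta' q0' F'" "dfa_lang delta' q0' F' = W"
  proof -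
    have "\<exists>k'. \<exists>delta q0 F. is_cdfa k' delta q0 F \<and> dfa_lang delta q0 F = W" using ex by blast
    from LeastI_ex[OF this] show ?thesis using that unfolding sc_def by blast
  qed
  have sub: "range Q \<subseteq> (\<lambda>q. {v. foldl delta' q v \<in> F'}) ` {..<sc W}"
  proof
    fix L assume "L \<in> range Q"
    then obtain u where u: "L = Q u" by blast
    have "foldl delta' q0' u < sc W"
      using D'(1) by (intro foldl_lt) (auto simp: is_cdfa_def)
    moreover have "L = {v. foldl delta' (foldl delta' q0' u) v \<in> F'}"
      using D'(2) u by (auto simp: Q_def dfa_lang_def)
    ultimately show "L \<in> (\<lambda>q. {v. foldl delta' q v \<in> F'}) ` {..<sc W}" by blast
  qed
  have "k \<le> sc W"
  proof -
    have "k \<le> card ((\<lambda>q. {v. foldl delta' q v \<in> F'}) ` {..<sc W})"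
      using card_mono[OF _ sub] k_def by simp
    also have "\<dots> \<le> sc W" using card_image_le[of "{..<sc W}"] by simp
    finally show ?thesis .
  qed
  then show ?thesis using le k_def Q_def by simp
qed



locale UU = fixes m n :: nat assumes m3: "m \<ge> 3" and n3: "n \<ge> 3"
begin

definition invK :: "sym \<Rightarrow> nat set \<Rightarrow> nat set" where
  "invK x S = {p. p < n \<and> delta_dcba n p x \<in> S}"
definition invL :: "sym \<Rightarrow> nat set \<Rightarrow> nat set" where
  "invL x T = {q. q < m \<and> delta_abcd m q x \<in> T}"
definition stp :: "nat set \<times> nat set \<Rightarrow> sym \<Rightarrow> nat set \<times> nat set" where
  "stp p x = (invK x (fst p), invL x (snd p) \<union> (if 0 \<in> invK x (fst p) then {m-1} else {}))"
definition st :: "sym list \<Rightarrow> nat set \<times> nat set" where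
  "st u = foldl stp ({n-1},{}) u"
definition W :: "sym list set" where
  "W = conc (reversal (U_dcba n)) (reversal (U_abcd m))"

lemma dK_lt: "p < n \<Longrightarrow> delta_dcba n p x < n"
  using n3 by (cases x) auto
lemma dL_lt: "q < m \<Longrightarrow> delta_abcd m q x < m"
  using m3 by (cases x) auto

definition Sf :: "sym list \<Rightarrow> nat set" where
  "Sf u = {p. p < n \<and> foldl (delta_dcba n) p (rev u) = n-1}"
definition Tf :: "sym list \<Rightarrow> nat set" where
  "Tf u = {q. q < m \<and> (\<exists>x y. u = x@y \<and> foldl (delta_dcba n) 0 (rev x) = n-1
              \<and> foldl (delta_abcd m) q (rev y) = m-1)}"

lemma app_snoc_split:
  "(u@[z] = x@y) \<longleftrightarrow> (y = [] \<and> x = u@[z]) \<or> (\<exists>y'. y = y'@[z] \<and> u = x@y')"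
  by (cases y rule: rev_cases) auto

lemma st_eq: "st u = (Sf u, Tf u)"
proof (induction u rule: rev_induct)
  case Nil
  show ?case using n3 by (auto simp: st_def Sf_def Tf_def)
next
  case (snoc z u)
  have stu: "st (u@[z]) = stp (Sf u, Tf u) z" using snoc by (simp add: st_def)
  have S: "Sf (u@[z]) = invK z (Sf u)"
    by (auto simp: Sf_def invK_def dK_lt)
  have T: "Tf (u@[z]) = invL z (Tf u) \<union> (if 0 \<in> Sf (u@[z]) then {m-1} else {})"
  proof -
    have "q \<in> Tf (u@[z]) \<longleftrightarrow> q \<in> invL z (Tf u) \<union> (if 0 \<in> Sf (u@[z]) then {m-1} else {})" for q
    proof -
      have "q \<in> Tf (u@[z]) \<longleftrightarrow> q < m \<and> ((foldl (delta_dcba n) 0 (rev (u@[z])) = n-1 \<and> q = m-1)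
          \<or> (\<exists>x y'. u = x@y' \<and> foldl (delta_dcba n) 0 (rev x) = n-1
              \<and> foldl (delta_abcd m) (delta_abcd m q z) (rev y') = m-1))"
      proof -
        have e: "(\<exists>x y. u@[z] = x@y \<and> P x \<and> R y) \<longleftrightarrow> (P (u@[z]) \<and> R []) \<or> (\<exists>x y'. u = x@y' \<and> P x \<and> R (y'@[z]))"
          for P R unfolding app_snoc_split by blast
        show ?thesis unfolding Tf_def mem_Collect_eq e by simp
      qed
      also have "\<dots> \<longleftrightarrow> q \<in> invL z (Tf u) \<union> (if 0 \<in> Sf (u@[z]) then {m-1} else {})"
        using n3 m3 by (auto simp: invL_def Tf_def Sf_def dL_lt)
      finally show ?thesis .
    qed
    then show ?thesis by blast
  qed
  show ?case using stu S T by (simp add: stp_def)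
qed

lemma W_iff: "w \<in> W \<longleftrightarrow> 0 \<in> snd (st w)"
proof -
  have "w \<in> W \<longleftrightarrow> (\<exists>x y. w = x@y \<and> rev x \<in> U_dcba n \<and> rev y \<in> U_abcd m)"
    unfolding W_def conc_def reversal_def by force
  also have "\<dots> \<longleftrightarrow> 0 \<in> Tf w"
    using m3 by (auto simp: Tf_def U_dcba_def U_abcd_def dfa_lang_def)
  finally show ?thesis by (simp add: st_eq)
qed

definition acc :: "nat set \<times> nat set \<Rightarrow> sym list set" where
  "acc p = {v. 0 \<in> snd (foldl stp p v)}"

lemma quot_acc: "{v. u@v \<in> W} = acc (st u)"
  by (simp add: W_iff acc_def st_def)

end


lemma modsum: "p < n \<Longrightarrow> j < (n::nat) \<Longrightarrow> (p+j) mod n = (if p+j < n then p+j else p+j-n)"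
  by (auto simp: mod_if le_mod_geq)

context UU begin

definition shK :: "nat set \<Rightarrow> nat \<Rightarrow> nat set" where
  "shK S k = {p. p < n \<and> (p+k) mod n \<in> S}"
definition shL :: "nat set \<Rightarrow> nat \<Rightarrow> nat set" where
  "shL T k = {p. p < m \<and> (p+k) mod m \<in> T}"

lemma modeq3: "((x+k) mod (N::nat) + j) mod N = (x + (j+k)) mod N"
  by (metis mod_add_left_eq add.assoc add.commute)
lemma shK_shK: "shK (shK S j) k = shK S (j+k)"
  by (auto simp: shK_def modeq3)
lemma shL_shL: "shL (shL S j) k = shL S (j+k)"
  by (auto simp: shL_def modeq3)
lemma rep_snoc: "replicate (Suc k) x = replicate k x @ [x]"
  by (simp add: replicate_append_same)
lemma shK_n: "S \<subseteq> {..<n} \<Longrightarrow> shK S n = S"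
  by (auto simp: shK_def)
lemma shL_m: "S \<subseteq> {..<m} \<Longrightarrow> shL S m = S"
  by (auto simp: shL_def)
lemma shK_0: "S \<subseteq> {..<n} \<Longrightarrow> shK S 0 = S"
  by (auto simp: shK_def)
lemma shL_0: "S \<subseteq> {..<m} \<Longrightarrow> shL S 0 = S"
  by (auto simp: shL_def)

definition reach :: "nat set \<times> nat set \<Rightarrow> bool" where
  "reach p \<longleftrightarrow> (\<exists>u. st u = p)"

lemma reach_init: "reach ({n-1},{})"
  unfolding reach_def by (rule exI[of _ "[]"]) (simp add: st_def)

lemma reach_step: "reach p \<Longrightarrow> reach (stp p x)"
  unfolding reach_def st_def by (metis foldl_Cons foldl_Nil foldl_append)

lemma reach_fold: "reach p \<Longrightarrow> reach (foldl stp p w)"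
proof (induction w arbitrary: p)
  case Nil then show ?case by simp
next
  case (Cons x w)
  then show ?case using reach_step[OF Cons.prems, of x] by simp
qed

definition P :: "(nat set \<times> nat set) set" where
  "P = {(S,T). S \<subseteq> {..<n} \<and> T \<subseteq> {..<m} \<and> (0 \<in> S \<longrightarrow> m-1 \<in> T)}"

lemma stp_P: "stp p x \<in> P"
  using m3 by (auto simp: stp_def P_def invK_def invL_def)

lemma reach_P: "reach p \<Longrightarrow> p \<in> P"
proof -
  assume "reach p"
  then obtain u where "st u = p" by (auto simp: reach_def)
  then show ?thesis
  proof (cases u rule: rev_cases)
    case Nil then show ?thesis using \<open>st u = p\<close> n3 m3 by (auto simp: st_def P_def)
  next
    case (snoc v x) then show ?thesis using \<open>st u = p\<close> stp_P by (metis foldl_Cons foldl_Nil foldl_append st_def)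
  qed
qed

lemma invK_d: "invK d S = shK S 1"
  by (auto simp: invK_def shK_def)
lemma invL_a: "invL a T = shL T 1"
  by (auto simp: invL_def shL_def)
lemma invK_a: "invK a S = S \<inter> {..<n}"
  by (auto simp: invK_def)
lemma invL_d: "invL d T = T \<inter> {..<m}"
  by (auto simp: invL_def)

lemma stp_a: "stp (S,T) a = (S \<inter> {..<n}, shL T 1 \<union> (if 0 \<in> S then {m-1} else {}))"
  using n3 by (auto simp: stp_def invK_a invL_a)
lemma stp_d: "stp (S,T) d = (shK S 1, T \<inter> {..<m} \<union> (if 1 \<in> S then {m-1} else {}))"
  using n3 by (auto simp: stp_def invK_d invL_d shK_def)

lemma fold_a: "S \<subseteq> {..<n} \<Longrightarrow> 0 \<notin> S \<Longrightarrow> T \<subseteq> {..<m} \<Longrightarrow>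
   foldl stp (S,T) (replicate k a) = (S, shL T k)"
proof (induction k)
  case 0 then show ?case by (simp add: shL_0)
next
  case (Suc k)
  have "foldl stp (S,T) (replicate (Suc k) a) = stp (foldl stp (S,T) (replicate k a)) a"
    by (simp only: rep_snoc foldl_append foldl_Cons foldl_Nil)
  also have "\<dots> = (S, shL T (Suc k))" using Suc by (auto simp: stp_a shL_shL)
  finally show ?case .
qed

lemma fold_a0: "S \<subseteq> {..<n} \<Longrightarrow> 0 \<in> S \<Longrightarrow> k \<le> m \<Longrightarrow> T \<subseteq> {..<m} \<Longrightarrow>
   foldl stp (S,T) (replicate k a) = (S, {p. p < m \<and> ((p+k) mod m \<in> T \<or> m - k \<le> p)})"
proof (induction k)
  case 0 then show ?case by (auto simp: shL_0)
next
  case (Suc k)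
  have "foldl stp (S,T) (replicate (Suc k) a) = stp (foldl stp (S,T) (replicate k a)) a"
    by (simp only: rep_snoc foldl_append foldl_Cons foldl_Nil)
  also have "\<dots> = stp (S, {p. p < m \<and> ((p+k) mod m \<in> T \<or> m - k \<le> p)}) a" using Suc by simp
  also have "\<dots> = (S, {p. p < m \<and> ((p+Suc k) mod m \<in> T \<or> m - Suc k \<le> p)})"
  proof -
    have "q \<in> shL {p. p < m \<and> ((p+k) mod m \<in> T \<or> m - k \<le> p)} 1 \<union> {m-1} \<longleftrightarrow>
          q < m \<and> ((q+Suc k) mod m \<in> T \<or> m - Suc k \<le> q)" for q
    proof (cases "q = m - 1")
      case True then show ?thesis using m3 Suc.prems by (auto simp: shL_def)
    next
      case False
      then have "q < m \<Longrightarrow> (q+1) mod m = q+1" by simp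
      then show ?thesis using False Suc.prems m3
        by (auto simp: shL_def mod_add_left_eq)
    qed
    then show ?thesis using Suc.prems by (auto simp: stp_a)
  qed
  finally show ?case .
qed

lemma full_stays: "snd (foldl stp (S, {..<m}) w) = {..<m}"
proof (induction w arbitrary: S)
  case Nil then show ?case by simp
next
  case (Cons x w)
  have "snd (stp (S, {..<m}) x) = {..<m}"
    using m3 dL_lt by (auto simp: stp_def invL_def)
  then have "stp (S, {..<m}) x = (fst (stp (S, {..<m}) x), {..<m})" by (metis prod.collapse)
  then show ?case using Cons by (metis foldl_Cons)
qed

lemma fold_d: "T \<subseteq> {..<m} \<Longrightarrow> S \<subseteq> {..<n} \<Longrightarrow>
   foldl stp (S,T) (replicate j d) = (shK S j, T \<union> (if \<exists>l. 1 \<le> l \<and> l \<le> j \<and> l mod n \<in> S then {m-1} else {}))"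
proof (induction j)
  case 0 then show ?case by (auto simp: shK_def)
next
  case (Suc j)
  have "foldl stp (S,T) (replicate (Suc j) d) = stp (foldl stp (S,T) (replicate j d)) d"
    by (simp only: rep_snoc foldl_append foldl_Cons foldl_Nil)
  also have "\<dots> = (shK S (Suc j), T \<union> (if \<exists>l. 1 \<le> l \<and> l \<le> Suc j \<and> l mod n \<in> S then {m-1} else {}))"
  proof -
    have e: "1 \<in> shK S j \<longleftrightarrow> Suc j mod n \<in> S" using n3 by (simp add: shK_def)
    have "(\<exists>l. 1 \<le> l \<and> l \<le> Suc j \<and> l mod n \<in> S) \<longleftrightarrow> (\<exists>l. 1 \<le> l \<and> l \<le> j \<and> l mod n \<in> S) \<or> Suc j mod n \<in> S"
      using le_Suc_eq by auto
    then show ?thesis using Suc m3 e by (auto simp: stp_d shK_shK)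
  qed
  finally show ?case .
qed

end

context UU begin

lemma invK_b_sh: "1 \<le> j \<Longrightarrow> j < n \<Longrightarrow>
  invK b (shK S j) = shK {p. p < n \<and> (if p = j-1 then j else p) \<in> S} j"
proof -
  assume j: "1 \<le> j" "j < n"
  have "p \<in> invK b (shK S j) \<longleftrightarrow> p \<in> shK {p. p < n \<and> (if p = j-1 then j else p) \<in> S} j" for p
  proof (cases "p < n")
    case True
    then show ?thesis using j n3 by (auto simp: invK_def shK_def modsum split: if_splits)
  qed (auto simp: invK_def shK_def)
  then show ?thesis by blast
qed

lemma invK_c_sh: "j+1 < n \<Longrightarrow>
  invK c (shK S j) = shK {p. p < n \<and> (if p = j then j+1 else if p = j+1 then j else p) \<in> S} j"
proof -
  assume j: "j+1 < n"
  have "p \<in> invK c (shK S j) \<longleftrightarrow> p \<in> shK {p. p < n \<and> (if p = j then j+1 else if p = j+1 then j else p) \<in> S} j" for p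
  proof (cases "p < n")
    case True
    then show ?thesis using j n3 by (auto simp: invK_def shK_def modsum split: if_splits)
  qed (auto simp: invK_def shK_def)
  then show ?thesis by blast
qed

definition Rp :: "nat set \<Rightarrow> bool" where
  "Rp S \<longleftrightarrow> (\<exists>T. T \<subseteq> {m-1} \<and> reach (S,T))"

lemma Rp_sub: "Rp S \<Longrightarrow> S \<subseteq> {..<n}"
  using reach_P by (auto simp: Rp_def P_def)

lemma Rp_step: "Rp S \<Longrightarrow> x \<noteq> a \<Longrightarrow> Rp (invK x S)"
proof -
  assume R: "Rp S" and x: "x \<noteq> a"
  then obtain T where T: "T \<subseteq> {m-1}" "reach (S,T)" by (auto simp: Rp_def)
  have "snd (stp (S,T) x) \<subseteq> {m-1}"
    using T(1) x m3 by (cases x) (auto simp: stp_def invL_def)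
  moreover have "reach (stp (S,T) x)" using reach_step T by blast
  moreover have "fst (stp (S,T) x) = invK x S" by (simp add: stp_def)
  ultimately show ?thesis unfolding Rp_def by (metis prod.collapse)
qed

lemma Rp_shift: "Rp S \<Longrightarrow> Rp (shK S k)"
proof (induction k)
  case 0 then show ?case using Rp_sub shK_0 by simp
next
  case (Suc k)
  then have "Rp (invK d (shK S k))" using Rp_step by blast
  then show ?case by (simp add: invK_d shK_shK)
qed

lemma Rp_back: "Rp (shK S j) \<Longrightarrow> S \<subseteq> {..<n} \<Longrightarrow> j \<le> n \<Longrightarrow> Rp S"
proof -
  assume a: "Rp (shK S j)" "S \<subseteq> {..<n}" "j \<le> n"
  have "Rp (shK (shK S j) (n-j))" using Rp_shift a(1) by blast
  moreover have "shK (shK S j) (n-j) = S" using a(2,3) by (simp add: shK_shK shK_n)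
  ultimately show ?thesis by simp
qed

lemma Rp_ins: "Rp S \<Longrightarrow> i \<in> S \<Longrightarrow> 1 \<le> i \<Longrightarrow> i < n \<Longrightarrow> Rp (insert (i-1) S)"
proof -
  assume R: "Rp S" and i: "i \<in> S" "1 \<le> i" "i < n"
  have sub: "S \<subseteq> {..<n}" using Rp_sub R .
  have "Rp (invK b (shK S i))" using Rp_step[OF Rp_shift[OF R], of b] by simp
  then have "Rp (shK {p. p < n \<and> (if p = i-1 then i else p) \<in> S} i)" using invK_b_sh i by simp
  moreover have "{p. p < n \<and> (if p = i-1 then i else p) \<in> S} = insert (i-1) S"
  proof (intro set_eqI iffI)
    fix x assume "x \<in> {p. p < n \<and> (if p = i-1 then i else p) \<in> S}"
    then show "x \<in> insert (i-1) S" by (auto split: if_splits)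
  next
    fix x assume x: "x \<in> insert (i-1) S"
    show "x \<in> {p. p < n \<and> (if p = i-1 then i else p) \<in> S}"
    proof (cases "x = i - 1")
      case True then show ?thesis using i by simp
    next
      case False then show ?thesis using x sub by auto
    qed
  qed
  ultimately have "Rp (shK (insert (i-1) S) i)" by simp
  moreover have "insert (i-1) S \<subseteq> {..<n}" using sub i by auto
  ultimately show ?thesis using Rp_back[of "insert (i-1) S" i] i(3) by simp
qed

lemma Rp_move: "Rp S \<Longrightarrow> i \<in> S \<Longrightarrow> 1 \<le> i \<Longrightarrow> i < n \<Longrightarrow> i-1 \<notin> S \<Longrightarrow> Rp (insert (i-1) (S - {i}))"
proof -
  assume R: "Rp S" and i: "i \<in> S" "1 \<le> i" "i < n" "i-1 \<notin> S"
  have sub: "S \<subseteq> {..<n}" using Rp_sub R .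
  have "Rp (invK c (shK S (i-1)))" using Rp_step[OF Rp_shift[OF R], of c] by simp
  then have "Rp (shK {p. p < n \<and> (if p = i-1 then i-1+1 else if p = i-1+1 then i-1 else p) \<in> S} (i-1))"
    using invK_c_sh[of "i-1" S] i by simp
  moreover have "{p. p < n \<and> (if p = i-1 then i-1+1 else if p = i-1+1 then i-1 else p) \<in> S} = insert (i-1) (S - {i})"
  proof (intro set_eqI iffI)
    fix x assume "x \<in> {p. p < n \<and> (if p = i-1 then i-1+1 else if p = i-1+1 then i-1 else p) \<in> S}"
    then show "x \<in> insert (i-1) (S - {i})" using i by (auto split: if_splits)
  next
    fix x assume "x \<in> insert (i-1) (S - {i})"
    then show "x \<in> {p. p < n \<and> (if p = i-1 then i-1+1 else if p = i-1+1 then i-1 else p) \<in> S}"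
      using i sub by auto
  qed
  ultimately have "Rp (shK (insert (i-1) (S - {i})) (i-1))" by simp
  moreover have "insert (i-1) (S - {i}) \<subseteq> {..<n}" using sub i by auto
  ultimately show ?thesis using Rp_back[of "insert (i-1) (S - {i})" "i-1"] i by linarith
qed

lemma Rp_insmove: "Rp S \<Longrightarrow> i \<in> S \<Longrightarrow> i < n \<Longrightarrow> j < i \<Longrightarrow> (\<forall>l. j \<le> l \<and> l < i \<longrightarrow> l \<notin> S) \<Longrightarrow> Rp (insert j S)"
proof (induction "i - 1 - j" arbitrary: j)
  case 0
  then have "j = i - 1" by simp
  then show ?case using Rp_ins 0 by simp
next
  case (Suc k)
  then have "Rp (insert (j+1) S)" by (intro Suc.hyps) auto
  moreover have "j + 1 \<notin> S" "j \<notin> S" using Suc by auto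
  ultimately have "Rp (insert (j+1-1) (insert (j+1) S - {j+1}))"
    using Suc by (intro Rp_move) auto
  moreover have "insert (j+1-1) (insert (j+1) S - {j+1}) = insert j S" using \<open>j+1 \<notin> S\<close> by auto
  ultimately show ?case by simp
qed

lemma Rp_single: "j < n \<Longrightarrow> Rp {j}"
proof (induction "n - 1 - j" arbitrary: j)
  case 0
  then have "j = n - 1" by simp
  then show ?case using reach_init by (auto simp: Rp_def)
next
  case (Suc k)
  then have "Rp {j+1}" by (intro Suc.hyps) auto
  from Rp_move[OF this] have "Rp (insert (j+1-1) ({j+1} - {j+1}))" using Suc by auto
  then show ?case by simp
qed

lemma Rp_all: "S \<subseteq> {..<n} \<Longrightarrow> S \<noteq> {} \<Longrightarrow> Rp S"
proof (induction "card S" arbitrary: S rule: less_induct)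
  case less
  have fin: "finite S" using less.prems finite_subset by blast
  show ?case
  proof (cases "card S = 1")
    case True
    then obtain j where "S = {j}" using card_1_singletonE by blast
    then show ?thesis using Rp_single less.prems by auto
  next
    case False
    define M where "M = Max S"
    have M: "M \<in> S" "\<forall>x\<in>S. x \<le> M" using fin less.prems M_def by auto
    have ne: "S - {M} \<noteq> {}"
    proof
      assume "S - {M} = {}"
      then have "S = {M}" using M(1) by blast
      then show False using False by simp
    qed
    define y where "y = Max (S - {M})"
    have y0: "y \<in> S - {M}" using fin ne y_def Max_in[of "S - {M}"] by simp
    have y: "y \<in> S" "y \<noteq> M" "\<forall>x\<in>S - {M}. x \<le> y" using y0 fin y_def by auto
    have yM: "y < M" using y M by force
    have "card (S - {y}) < card S" using fin y(1) by (rule card_Diff1_less)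
    moreover have "S - {y} \<subseteq> {..<n}" "S - {y} \<noteq> {}" using less.prems M y by auto
    ultimately have "Rp (S - {y})" using less.hyps by blast
    have nob: "\<forall>l. y \<le> l \<and> l < M \<longrightarrow> l \<notin> S - {y}"
    proof (intro allI impI)
      fix l assume l: "y \<le> l \<and> l < M"
      show "l \<notin> S - {y}"
      proof
        assume "l \<in> S - {y}"
        then have "l \<in> S - {M}" using l by auto
        then have "l \<le> y" using y(3) by blast
        then show False using l \<open>l \<in> S - {y}\<close> by auto
      qed
    qed
    have "M \<in> S - {y}" "M < n" using M y less.prems by auto
    then have "Rp (insert y (S - {y}))"
      using Rp_insmove[OF \<open>Rp (S - {y})\<close>, of M y] yM nob by blast
    then show ?thesis using y by (simp add: insert_absorb)
  qed
qed

lemma Rp_empty: "Rp {}"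
proof -
  have "Rp (invK b {n-1})" using Rp_step[OF Rp_single[of "n-1"], of b] n3 by simp
  moreover have "invK b {n-1} = {}" using n3 by (auto simp: invK_def)
  ultimately show ?thesis by simp
qed

lemma Rp_any: "S \<subseteq> {..<n} \<Longrightarrow> Rp S"
  using Rp_all Rp_empty by blast

end

context UU begin

lemma invKc_invol: "S \<subseteq> {..<n} \<Longrightarrow> invK c (invK c S) = S"
  using n3 by (auto simp: invK_def)
lemma invLb_invol: "T \<subseteq> {..<m} \<Longrightarrow> invL b (invL b T) = T"
  using m3 by (auto simp: invL_def)

lemma reach_A: "S \<subseteq> {..<n} \<Longrightarrow> 0 \<notin> S \<Longrightarrow> reach (S, {})"
proof -
  assume S: "S \<subseteq> {..<n}" "0 \<notin> S"
  have "invK c S \<subseteq> {..<n}" by (auto simp: invK_def)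
  then have "Rp (invK c S)" using Rp_any by blast
  then obtain T where T: "T \<subseteq> {m-1}" "reach (invK c S, T)" unfolding Rp_def by blast
  have "reach (stp (invK c S, T) c)" using reach_step T(2) by blast
  moreover have "invL c T = {}" using T(1) m3 by (auto simp: invL_def)
  ultimately show ?thesis using S by (simp add: stp_def invKc_invol)
qed

lemma shL_Un: "shL (A \<union> B) k = shL A k \<union> shL B k"
  by (auto simp: shL_def)

lemma Tup: "reach (S,T) \<Longrightarrow> S \<subseteq> {..<n} \<Longrightarrow> S \<noteq> {} \<Longrightarrow> 0 \<notin> S \<Longrightarrow> T \<subseteq> {..<m} \<Longrightarrow> i < m
  \<Longrightarrow> reach (S, insert i T)"
proof -
  assume R: "reach (S,T)" and S: "S \<subseteq> {..<n}" "S \<noteq> {}" "0 \<notin> S" and T: "T \<subseteq> {..<m}" and i: "i < m"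
  define T1 where "T1 = shL T (i+1)"
  have T1: "T1 \<subseteq> {..<m}" by (auto simp: T1_def shL_def)
  have s1: "foldl stp (S,T) (replicate (i+1) a) = (S, T1)" unfolding T1_def by (rule fold_a[OF S(1) S(3) T])
  obtain s where s: "s \<in> S" using S by blast
  have ex: "\<exists>l. 1 \<le> l \<and> l \<le> n \<and> l mod n \<in> S"
  proof -
    have "s \<noteq> 0" "s < n" using s S by auto
    then show ?thesis using s by (intro exI[of _ s]) auto
  qed
  have s2: "foldl stp (S,T1) (replicate n d) = (S, T1 \<union> {m-1})"
    using fold_d[OF T1 S(1), of n] ex shK_n[OF S(1)] by simp
  have T2: "T1 \<union> {m-1} \<subseteq> {..<m}" using T1 m3 by auto
  have s3: "foldl stp (S, T1 \<union> {m-1}) (replicate (m-1-i) a) = (S, shL (T1 \<union> {m-1}) (m-1-i))"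
    using fold_a[OF S(1) S(3) T2] .
  have eq: "shL (T1 \<union> {m-1}) (m-1-i) = insert i T"
  proof -
    have "shL T1 (m-1-i) = shL T m" using i by (simp add: T1_def shL_shL)
    also have "\<dots> = T" using shL_m T by simp
    finally have A: "shL T1 (m-1-i) = T" .
    have B: "shL {m-1} (m-1-i) = {i}"
    proof -
      have "(p + (m-1-i)) mod m = m-1 \<longleftrightarrow> p = i" if p: "p < m" for p
      proof (cases "p \<le> i")
        case True
        then have "p + (m-1-i) < m" using i by arith
        then have "(p + (m-1-i)) mod m = p + (m-1-i)" by simp
        then show ?thesis using True i by arith
      next
        case False
        then have e: "p + (m-1-i) = (p-1-i) + m" using i by arith
        have "p-1-i < m" using p by arith
        then have "(p + (m-1-i)) mod m = p-1-i" unfolding e by simp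
        then show ?thesis using False p by arith
      qed
      then show ?thesis using i by (auto simp: shL_def)
    qed
    have "shL (T1 \<union> {m-1}) (m-1-i) = shL T1 (m-1-i) \<union> shL {m-1} (m-1-i)" by (rule shL_Un)
    then show ?thesis using A B by auto
  qed
  have "foldl stp (S,T) (replicate (i+1) a @ replicate n d @ replicate (m-1-i) a) = (S, insert i T)"
    by (simp only: foldl_append s1 s2 s3 eq)
  then show ?thesis using reach_fold[OF R] by metis
qed

lemma reach_T: "S \<subseteq> {..<n} \<Longrightarrow> S \<noteq> {} \<Longrightarrow> 0 \<notin> S \<Longrightarrow> T \<subseteq> {..<m} \<Longrightarrow> reach (S,T)"
proof -
  assume S: "S \<subseteq> {..<n}" "S \<noteq> {}" "0 \<notin> S" and T: "T \<subseteq> {..<m}"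
  have fin: "finite T" using T finite_subset by blast
  have "T \<subseteq> {..<m} \<longrightarrow> reach (S,T)" using fin
  proof (induction T rule: finite_induct)
    case empty then show ?case using reach_A S by simp
  next
    case (insert x F)
    then show ?case using Tup S by auto
  qed
  then show ?thesis using T by simp
qed

lemma mod_pred: assumes "1 \<le> x" "x < (N::nat)" shows "(x + (N-1)) mod N = x - 1"
proof -
  have e: "x + (N-1) = (x-1) + N" using assms by linarith
  have l: "x - 1 < N" using assms by linarith
  have "((x-1) + N) mod N = (x-1) mod N" by (rule mod_add_self2)
  also have "\<dots> = x - 1" using l by (rule mod_less)
  finally show ?thesis unfolding e .
qed

lemma reach_0aux: "T \<subseteq> {..<m} \<Longrightarrow> m-1 \<in> T \<Longrightarrow>
  \<forall>S. S \<subseteq> {..<n} \<and> 0 \<in> S \<and> k < n \<and> n-1-k \<notin> S \<and> (\<forall>l<k. n-1-l \<in> S) \<longrightarrow> reach (S,T)"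
proof (induction k)
  case 0
  show ?case
  proof (intro allI impI)
    fix S assume S: "S \<subseteq> {..<n} \<and> 0 \<in> S \<and> 0 < n \<and> n-1-0 \<notin> S \<and> (\<forall>l<0. n-1-l \<in> S)"
    define S1 where "S1 = shK S (n-1)"
    have e1: "(n-1) mod n = n-1" "(1 + (n-1)) mod n = 0" using n3 by auto
    have S1: "S1 \<subseteq> {..<n}" "0 \<notin> S1" "1 \<in> S1"
      using S e1 n3 unfolding S1_def shK_def by auto
    have "S1 \<noteq> {}" using S1(3) by blast
    then have "reach (S1,T)" using reach_T[OF S1(1) _ S1(2) 0(1)] by simp
    then have "reach (stp (S1,T) d)" by (rule reach_step)
    moreover have "shK S1 1 = S" using S unfolding S1_def shK_shK by (simp add: shK_n)
    moreover have "T \<inter> {..<m} \<union> (if 1 \<in> S1 then {m-1} else {}) = T" using S1 0 by auto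
    ultimately show "reach (S, T)" by (simp add: stp_d)
  qed
next
  case (Suc k)
  show ?case
  proof (intro allI impI)
    fix S assume S: "S \<subseteq> {..<n} \<and> 0 \<in> S \<and> Suc k < n \<and> n-1-Suc k \<notin> S \<and> (\<forall>l<Suc k. n-1-l \<in> S)"
    define S1 where "S1 = shK S (n-1)"
    have nk: "k + 2 < n"
    proof (rule ccontr)
      assume "\<not> k + 2 < n"
      then have "n - 1 - Suc k = 0" by simp
      moreover have "n-1-Suc k \<notin> S" "0 \<in> S" using S by blast+
      ultimately show False by simp
    qed
    have a1: "S1 \<subseteq> {..<n}" by (auto simp: S1_def shK_def)
    have "(n-1) mod n = n-1" "n - 1 - 0 \<in> S" using n3 S by auto
    then have a2: "0 \<in> S1" using n3 unfolding S1_def shK_def by simp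
    have a3: "n-1-k \<notin> S1"
    proof -
      have r: "1 \<le> n-1-k" "n-1-k < n" using nk by arith+
      have "(n-1-k + (n-1)) mod n = n-1-k-1" using mod_pred[OF r] .
      moreover have "n-1-k-1 = n-1-Suc k" by arith
      moreover have "n-1-Suc k \<notin> S" using S by blast
      ultimately have "(n-1-k + (n-1)) mod n \<notin> S" by simp
      then show ?thesis unfolding S1_def shK_def by blast
    qed
    have a4: "\<forall>l<k. n-1-l \<in> S1"
    proof (intro allI impI)
      fix l assume l: "l < k"
      have r: "1 \<le> n-1-l" "n-1-l < n" using nk l by arith+
      have "(n-1-l + (n-1)) mod n = n-1-l-1" using mod_pred[OF r] .
      moreover have "n-1-l-1 = n-1-Suc l" by arith
      moreover have "n-1-Suc l \<in> S" using S l by auto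
      ultimately have "(n-1-l + (n-1)) mod n \<in> S" by simp
      then show "n-1-l \<in> S1" using r unfolding S1_def shK_def by blast
    qed
    have IH: "\<forall>S. S \<subseteq> {..<n} \<and> 0 \<in> S \<and> k < n \<and> n-1-k \<notin> S \<and> (\<forall>l<k. n-1-l \<in> S) \<longrightarrow> reach (S,T)"
      by (rule Suc.IH[OF Suc.prems(1) Suc.prems(2)])
    have kn: "k < n" using nk by simp
    have "S1 \<subseteq> {..<n} \<and> 0 \<in> S1 \<and> k < n \<and> n-1-k \<notin> S1 \<and> (\<forall>l<k. n-1-l \<in> S1) \<longrightarrow> reach (S1,T)"
      using IH by (rule spec)
    then have "reach (S1,T)" using a1 a2 a3 a4 kn by blast
    then have "reach (stp (S1,T) d)" by (rule reach_step)
    moreover have "shK S1 1 = S" using S unfolding S1_def shK_shK by (simp add: shK_n)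
    moreover have "T \<inter> {..<m} \<union> (if 1 \<in> S1 then {m-1} else {}) = T" using Suc.prems by auto
    ultimately show "reach (S, T)" by (simp add: stp_d)
  qed
qed

lemma reach_0: "S \<subseteq> {..<n} \<Longrightarrow> 0 \<in> S \<Longrightarrow> S \<noteq> {..<n} \<Longrightarrow> T \<subseteq> {..<m} \<Longrightarrow> m-1 \<in> T \<Longrightarrow> reach (S,T)"
proof -
  assume S: "S \<subseteq> {..<n}" "0 \<in> S" "S \<noteq> {..<n}" and T: "T \<subseteq> {..<m}" "m-1 \<in> T"
  define x where "x = Max ({..<n} - S)"
  have ne: "{..<n} - S \<noteq> {}" using S by auto
  have x: "x \<in> {..<n} - S" using ne x_def Max_in[of "{..<n} - S"] by simp
  have xmax: "\<forall>y \<in> {..<n} - S. y \<le> x" using x_def by simp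
  define k where "k = n - 1 - x"
  have k: "k < n" "n-1-k \<notin> S" using x k_def by auto
  have kl: "\<forall>l<k. n-1-l \<in> S"
  proof (intro allI impI)
    fix l assume "l < k"
    then have "n-1-l > x" "n-1-l < n" using k_def x by auto
    then show "n-1-l \<in> S" using xmax by force
  qed
  show ?thesis using reach_0aux[OF T, of k] S k kl by blast
qed

lemma reach_full: "T \<subseteq> {..<m} \<Longrightarrow> m-1 \<in> T \<Longrightarrow> reach ({..<n}, T)"
proof -
  assume T: "T \<subseteq> {..<m}" "m-1 \<in> T"
  have T': "invL b T \<subseteq> {..<m}" "m-1 \<in> invL b T" using T m3 by (auto simp: invL_def)
  have X: "{..<n-1} \<subseteq> {..<n}" "0 \<in> {..<n-1}" "{..<n-1} \<noteq> {..<n}" using n3 by auto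
  have "reach ({..<n-1}, invL b T)" using reach_0[OF X T'] .
  then have "reach (stp ({..<n-1}, invL b T) b)" by (rule reach_step)
  moreover have "invK b {..<n-1} = {..<n}" using n3 by (auto simp: invK_def)
  moreover have "T \<union> {m-1} = T" using T by auto
  ultimately show ?thesis using invLb_invol[OF T(1)] n3 by (simp add: stp_def)
qed

lemma reach_empty: "T \<subseteq> {..<m} \<Longrightarrow> reach ({}, T)"
proof -
  assume T: "T \<subseteq> {..<m}"
  have T': "invL b T \<subseteq> {..<m}" by (auto simp: invL_def)
  have "reach ({n-1}, invL b T)" using reach_T[OF _ _ _ T'] n3 by auto
  then have "reach (stp ({n-1}, invL b T) b)" by (rule reach_step)
  moreover have "invK b {n-1} = {}" using n3 by (auto simp: invK_def)
  ultimately show ?thesis using invLb_invol[OF T] by (simp add: stp_def)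
qed

lemma range_st: "range st = P"
proof
  show "range st \<subseteq> P" using reach_P unfolding reach_def by blast
next
  show "P \<subseteq> range st"
  proof
    fix p assume p: "p \<in> P"
    obtain S T where ST: "p = (S,T)" by (cases p)
    have "reach (S,T)"
    proof -
      have S: "S \<subseteq> {..<n}" "T \<subseteq> {..<m}" "0 \<in> S \<longrightarrow> m-1 \<in> T" using p ST by (auto simp: P_def)
      show ?thesis
      proof (cases "S = {}")
        case True then show ?thesis using reach_empty S by simp
      next
        case ne: False
        show ?thesis
        proof (cases "0 \<in> S")
          case False then show ?thesis using reach_T S ne by simp
        next
          case True
          show ?thesis
          proof (cases "S = {..<n}")
            case True then show ?thesis using reach_full S \<open>0 \<in> S\<close> by simp
          next
            case False then show ?thesis using reach_0 S \<open>0 \<in> S\<close> by simp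
          qed
        qed
      qed
    qed
    then show "p \<in> range st" using ST unfolding reach_def by (metis rangeI)
  qed
qed

end

context UU begin

lemma acc_cons: "x#v \<in> acc p \<longleftrightarrow> v \<in> acc (stp p x)"
  by (simp add: acc_def)

lemma D1: "S \<subseteq> {..<n} \<Longrightarrow> T \<subseteq> {..<m} \<Longrightarrow> q < m \<Longrightarrow> replicate q a \<in> acc (S,T) \<longleftrightarrow> q \<in> T"
proof -
  assume S: "S \<subseteq> {..<n}" and T: "T \<subseteq> {..<m}" and q: "q < m"
  show ?thesis
  proof (cases "0 \<in> S")
    case True
    have "foldl stp (S,T) (replicate q a) = (S, {p. p < m \<and> ((p+q) mod m \<in> T \<or> m - q \<le> p)})"
      using fold_a0[OF S True _ T] q by simp
    then show ?thesis using q by (simp add: acc_def)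
  next
    case False
    have "foldl stp (S,T) (replicate q a) = (S, shL T q)" using fold_a[OF S False T] .
    then show ?thesis using q by (simp add: acc_def shL_def)
  qed
qed

lemma D2: "S \<subseteq> {..<n} \<Longrightarrow> S' \<subseteq> {..<n} \<Longrightarrow> T \<subseteq> {..<m} \<Longrightarrow> j \<in> S \<Longrightarrow> j \<notin> S' \<Longrightarrow> q \<notin> T \<Longrightarrow> q < m - 1
  \<Longrightarrow> acc (S,T) \<noteq> acc (S',T)"
proof -
  assume S: "S \<subseteq> {..<n}" and S': "S' \<subseteq> {..<n}" and T: "T \<subseteq> {..<m}" and j: "j \<in> S" "j \<notin> S'"
    and q: "q \<notin> T" "q < m - 1"
  have jn: "j < n" using S j by auto
  define w where "w = replicate j d @ replicate m a @ replicate q a"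
  define T1 where "T1 = T \<union> (if \<exists>l. 1 \<le> l \<and> l \<le> j \<and> l mod n \<in> S then {m-1} else {})"
  define T2 where "T2 = T \<union> (if \<exists>l. 1 \<le> l \<and> l \<le> j \<and> l mod n \<in> S' then {m-1} else {})"
  have T1: "T1 \<subseteq> {..<m}" using T m3 by (auto simp: T1_def)
  have T2: "T2 \<subseteq> {..<m}" using T m3 by (auto simp: T2_def)
  have sh: "shK S j \<subseteq> {..<n}" "shK S' j \<subseteq> {..<n}" by (auto simp: shK_def)
  have z: "0 \<in> shK S j" "0 \<notin> shK S' j" using j jn n3 by (auto simp: shK_def)
  have "foldl stp (S,T) w = foldl stp (foldl stp (shK S j, T1) (replicate m a)) (replicate q a)"
    unfolding w_def T1_def foldl_append fold_d[OF T S] by simp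
  also have "foldl stp (shK S j, T1) (replicate m a) = (shK S j, {..<m})"
    using fold_a0[OF sh(1) z(1) _ T1, of m] by auto
  finally have "snd (foldl stp (S,T) w) = {..<m}" using full_stays by simp
  then have in1: "w \<in> acc (S,T)" using m3 by (simp add: acc_def)
  have "foldl stp (S',T) w = foldl stp (shK S' j, T2) (replicate (m+q) a)"
    unfolding w_def T2_def foldl_append fold_d[OF T S'] by (simp add: replicate_add)
  also have "\<dots> = (shK S' j, shL T2 (m+q))" using fold_a[OF sh(2) z(2) T2] .
  finally have "w \<in> acc (S',T) \<longleftrightarrow> q \<in> T2" using q m3 by (simp add: acc_def shL_def)
  moreover have "q \<notin> T2" using q by (auto simp: T2_def)
  ultimately have "w \<notin> acc (S',T)" by simp
  then show ?thesis using in1 by blast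
qed

lemma D3: "S \<subseteq> {..<n} \<Longrightarrow> S' \<subseteq> {..<n} \<Longrightarrow> 0 \<notin> S \<Longrightarrow> 0 \<notin> S' \<Longrightarrow> S \<noteq> S'
  \<Longrightarrow> acc (S, {..<m} - {m-1}) \<noteq> acc (S', {..<m} - {m-1})"
proof
  assume S: "S \<subseteq> {..<n}" "S' \<subseteq> {..<n}" "0 \<notin> S" "0 \<notin> S'" "S \<noteq> S'"
    and eq: "acc (S, {..<m} - {m-1}) = acc (S', {..<m} - {m-1})"
  define T where "T = {..<m} - {m-1}"
  have Ta: "shL T 1 = {..<m} - {m-2}"
  proof -
    have "p < m \<Longrightarrow> ((p+1) mod m = m-1 \<longleftrightarrow> p = m-2)" for p
    proof -
      assume p: "p < m"
      show ?thesis
      proof (cases "p = m - 1")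
        case True then show ?thesis using m3 by simp
      next
        case False then have "(p+1) mod m = p + 1" using p by simp
        then show ?thesis using p m3 by arith
      qed
    qed
    then show ?thesis by (auto simp: shL_def T_def)
  qed
  have st1: "stp (S,T) a = (S, {..<m} - {m-2})" "stp (S',T) a = (S', {..<m} - {m-2})"
    using S Ta by (auto simp: stp_a)
  have "acc (stp (S,T) a) = acc (stp (S',T) a)"
    using eq acc_cons unfolding T_def by blast
  then have eq2: "acc (S, {..<m} - {m-2}) = acc (S', {..<m} - {m-2})" using st1 by simp
  obtain j where "j \<in> S \<and> j \<notin> S' \<or> j \<in> S' \<and> j \<notin> S" using S(5) by blast
  moreover have "m - 2 \<notin> {..<m} - {m-2}" "m - 2 < m - 1" "{..<m} - {m-2} \<subseteq> {..<m}" using m3 by auto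
  ultimately show False using D2 S eq2 by metis
qed

lemma acc_full: "acc (S, {..<m}) = UNIV"
  using full_stays m3 by (auto simp: acc_def)

definition Pnf :: "(nat set \<times> nat set) set" where
  "Pnf = {(S,T) \<in> P. T \<noteq> {..<m}}"

lemma acc_inj: "inj_on acc Pnf"
proof
  fix p p' assume p: "p \<in> Pnf" and p': "p' \<in> Pnf" and eq: "acc p = acc p'"
  obtain S T where ST: "p = (S,T)" by (cases p)
  obtain S' T' where ST': "p' = (S',T')" by (cases p')
  have h: "S \<subseteq> {..<n}" "T \<subseteq> {..<m}" "0 \<in> S \<longrightarrow> m-1 \<in> T" "T \<noteq> {..<m}"
    using p ST by (auto simp: Pnf_def P_def)
  have h': "S' \<subseteq> {..<n}" "T' \<subseteq> {..<m}" "0 \<in> S' \<longrightarrow> m-1 \<in> T'" "T' \<noteq> {..<m}"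
    using p' ST' by (auto simp: Pnf_def P_def)
  have TT: "T = T'"
  proof -
    have "q \<in> T \<longleftrightarrow> q \<in> T'" if "q < m" for q
      using D1[OF h(1,2) that] D1[OF h'(1,2) that] eq ST ST' by simp
    then show ?thesis using h(2) h'(2) by blast
  qed
  have SS: "S = S'"
  proof (rule ccontr)
    assume ne: "S \<noteq> S'"
    obtain q where q: "q < m" "q \<notin> T" using h(2,4) by blast
    show False
    proof (cases "\<exists>q. q < m - 1 \<and> q \<notin> T")
      case True
      then obtain q where q: "q < m - 1" "q \<notin> T" by blast
      obtain j where "j \<in> S \<and> j \<notin> S' \<or> j \<in> S' \<and> j \<notin> S" using ne by blast
      then show False using D2 h(1,2) h'(1) q eq ST ST' TT by metis
    next
      case False
      then have all: "\<forall>q<m-1. q \<in> T" by blast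
      have nm: "m-1 \<notin> T"
      proof
        assume mT: "m-1 \<in> T"
        have "{..<m} \<subseteq> T"
        proof
          fix x assume "x \<in> {..<m}"
          then have "x < m - 1 \<or> x = m - 1" by auto
          then show "x \<in> T" using all mT by blast
        qed
        then show False using h(2,4) by blast
      qed
      have "T = {..<m} - {m-1}"
      proof (intro set_eqI iffI)
        fix x assume "x \<in> T" then show "x \<in> {..<m} - {m-1}" using h(2) nm by auto
      next
        fix x assume "x \<in> {..<m} - {m-1}"
        then have "x < m - 1" by auto
        then show "x \<in> T" using all by blast
      qed
      then have "0 \<notin> S" "0 \<notin> S'" using h(3) h'(3) TT m3 by auto
      then show False using D3 h(1) h'(1) ne eq ST ST' TT \<open>T = {..<m} - {m-1}\<close> by metis
    qed
  qed
  show "p = p'" using ST ST' TT SS by simp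
qed

lemma acc_notU: "p \<in> Pnf \<Longrightarrow> acc p \<noteq> UNIV"
proof -
  assume p: "p \<in> Pnf"
  obtain S T where ST: "p = (S,T)" by (cases p)
  have h: "S \<subseteq> {..<n}" "T \<subseteq> {..<m}" "T \<noteq> {..<m}"
    using p ST by (auto simp: Pnf_def P_def)
  obtain q where q: "q < m" "q \<notin> T" using h by blast
  then have "replicate q a \<notin> acc (S,T)" using D1[OF h(1,2) q(1)] by simp
  then show ?thesis using ST by auto
qed

end


lemma card_sub_notin: "finite A \<Longrightarrow> x \<in> A \<Longrightarrow> card {S. S \<subseteq> A \<and> x \<notin> S} = 2 ^ (card A - 1)"
proof -
  assume A: "finite A" "x \<in> A"
  have "{S. S \<subseteq> A \<and> x \<notin> S} = Pow (A - {x})" by auto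
  then show ?thesis using A by (simp add: card_Pow)
qed

lemma card_sub_in: "finite A \<Longrightarrow> x \<in> A \<Longrightarrow> card {S. S \<subseteq> A \<and> x \<in> S} = 2 ^ (card A - 1)"
proof -
  assume A: "finite A" "x \<in> A"
  have e: "{S. S \<subseteq> A \<and> x \<in> S} = insert x ` Pow (A - {x})"
  proof (intro set_eqI iffI)
    fix S assume "S \<in> {S. S \<subseteq> A \<and> x \<in> S}"
    then have "S = insert x (S - {x})" "S - {x} \<in> Pow (A - {x})" by auto
    then show "S \<in> insert x ` Pow (A - {x})" by blast
  next
    fix S assume "S \<in> insert x ` Pow (A - {x})"
    then show "S \<in> {S. S \<subseteq> A \<and> x \<in> S}" using A by auto
  qed
  have "inj_on (insert x) (Pow (A - {x}))"
    by (rule inj_onI) (metis Diff_insert_absorb PowD Diff_iff insertI1 subset_iff)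
  then have "card (insert x ` Pow (A - {x})) = card (Pow (A - {x}))" by (rule card_image)
  then show ?thesis using A e by (simp add: card_Pow)
qed

context UU begin

lemma finP: "finite P"
proof -
  have "P \<subseteq> Pow {..<n} \<times> Pow {..<m}" by (auto simp: P_def)
  then show ?thesis by (rule finite_subset) simp
qed

lemma cardP: "card P = 3 * 2 ^ (m + n - 2)"
proof -
  define A1 where "A1 = {S. S \<subseteq> {..<n} \<and> 0 \<notin> S} \<times> {T. T \<subseteq> {..<m}}"
  define A2 where "A2 = {S. S \<subseteq> {..<n} \<and> 0 \<in> S} \<times> {T. T \<subseteq> {..<m} \<and> m-1 \<in> T}"
  have PA: "P = A1 \<union> A2" by (auto simp: P_def A1_def A2_def)
  have dis: "A1 \<inter> A2 = {}" by (auto simp: A1_def A2_def)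
  have f1: "finite A1" "finite A2" using finP PA by auto
  have c1: "card A1 = 2^(n-1) * 2^m"
  proof -
    have "{T. T \<subseteq> {..<m}} = Pow {..<m}" by auto
    then show ?thesis using card_sub_notin[of "{..<n}" 0] n3
      by (simp add: A1_def card_cartesian_product card_Pow)
  qed
  have c2: "card A2 = 2^(n-1) * 2^(m-1)"
    using card_sub_in[of "{..<n}" 0] card_sub_in[of "{..<m}" "m-1"] n3 m3
    by (simp add: A2_def card_cartesian_product)
  have "card P = card A1 + card A2" unfolding PA by (rule card_Un_disjoint[OF f1 dis])
  also have "\<dots> = 2^(n-1) * 2^m + 2^(n-1) * 2^(m-1)" using c1 c2 by simp
  also have "\<dots> = 3 * 2 ^ (m + n - 2)"
  proof -
    have e: "(2::nat)^m = 2 * 2^(m-1)" using m3 by (cases m) auto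
    have e2: "(2::nat)^(n-1) * 2^(m-1) = 2^(m+n-2)"
    proof -
      have "n - 1 + (m - 1) = m + n - 2" using m3 n3 by arith
      then show ?thesis by (metis power_add)
    qed
    have "(2::nat)^(n-1) * 2^m + 2^(n-1) * 2^(m-1) = 3 * (2^(n-1) * 2^(m-1))"
      unfolding e by simp
    then show ?thesis using e2 by simp
  qed
  finally show ?thesis .
qed

lemma card_accP: "card (acc ` P) = card P - 2^n + 1"
proof -
  define Pf where "Pf = {S. S \<subseteq> {..<n}} \<times> {{..<m}}"
  have Pf: "Pf \<subseteq> P" using m3 by (auto simp: Pf_def P_def)
  have PP: "P = Pnf \<union> Pf" using m3 by (auto simp: Pf_def P_def Pnf_def)
  have cPf: "card Pf = 2^n"
  proof -
    have "{S. S \<subseteq> {..<n}} = Pow {..<n}" by auto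
    then show ?thesis by (simp add: Pf_def card_cartesian_product card_Pow)
  qed
  have finPnf: "finite Pnf" using finP PP by auto
  have cPnf: "card Pnf = card P - 2^n"
  proof -
    have "Pnf = P - Pf" by (auto simp: Pf_def P_def Pnf_def)
    then show ?thesis using card_Diff_subset[OF _ Pf] finP cPf finite_subset[OF Pf] by simp
  qed
  have "Pf \<noteq> {}" by (auto simp: Pf_def)
  then have accf: "acc ` Pf = {UNIV}" using acc_full by (auto simp: Pf_def)
  have "acc ` P = acc ` Pnf \<union> {UNIV}" using PP accf by (simp add: image_Un)
  moreover have "UNIV \<notin> acc ` Pnf" using acc_notU by fastforce
  moreover have "card (acc ` Pnf) = card Pnf" using acc_inj by (rule card_image)
  ultimately have "card (acc ` P) = card Pnf + 1" using finPnf by simp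
  then show ?thesis using cPnf by simp
qed

lemma main: "sc W = 3 * 2 ^ (m + n - 2) - 2 ^ n + 1"
proof -
  have r: "range (\<lambda>u. {v. u@v \<in> W}) = acc ` P"
    using quot_acc range_st by (simp add: image_image[symmetric] image_comp)
  have "sc W = card (range (\<lambda>u. {v. u@v \<in> W}))"
    by (rule sc_quot) (simp add: r finP)
  then show ?thesis using r card_accP cardP by simp
qed

end

theorem theorem6:
  fixes m n :: nat
  assumes "m \<ge> 3" and "n \<ge> 3"
  shows "sc (conc (reversal (U_dcba n)) (reversal (U_abcd m))) = 3 * 2 ^ (m + n - 2) - 2 ^ n + 1"
proof -
  interpret UU m n using assms by unfold_locales
  show ?thesis using main by (simp add: W_def)
qed


end
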